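(* Let $n\in\mathbb N$, let $W,M$ be disjoint sets with $|W|=|M|=2n$, let $p\in W\cup M$, and let $D=\{(i,j)\in\{1,\dots,n\}^2: i\ne j\}$. There exist functions $\succ_W:\{0,1\}^D\to\mathcal P(W,M)$ and $\succ_M:\{0,1\}^D\to\mathcal P(M,W)$ such that for all $\bar x=(x^i_j)_{(i,j)\in D}$ and $\bar y=(y^i_j)_{(i,j)\in D}$ in $\{0,1\}^D$, the following are equivalent: (1) $p$ is single in some stable marriage with respect to $\succ_W(\bar x)$ and $\succ_M(\bar y)$; (2) $\mathrm{DISJ}(\bar x,\bar y)\ne0$.
   Context: $\mathcal P(A,B)$ is the set of profiles assigning to each $a\in A$ a preference list, i.e. a totally ordered subset of $B$ (others unacceptable). A participant prefers $x$ over $x'$ if $x$ precedes $x'$ on their list, or $x$ is on the list and $x'$ is not (being single counts as being matched to someone off the list). A marriage is a one-to-one map between a subset of $W$ and a subset of $M$; unmatched participants are single. A marriage is stable if every married participant is married to someone on their list and there is no blocking pair $(w,m)$ where $w$ prefers $m$ to her current situation and $m$ prefers $w$ to his. $\mathrm{DISJ}(\bar x,\bar y)=1$ if there is no $(i,j)$ with $x^i_j=y^i_j=1$, and $0$ otherwise. *)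

theory Defs
  imports Main
begin

text \<open>A preference list of a participant is a duplicate-free list of elements of the
other side (a totally ordered subset of B); elements not on the list are unacceptable.\<close>

definition profiles :: "'a set \<Rightarrow> 'a set \<Rightarrow> ('a \<Rightarrow> 'a list) set" where
  "profiles A B = {P. (\<forall>a\<in>A. distinct (P a) \<and> set (P a) \<subseteq> B) \<and> (\<forall>a. a \<notin> A \<longrightarrow> P a = [])}"

definition precedes :: "'a list \<Rightarrow> 'a \<Rightarrow> 'a \<Rightarrow> bool" where
  "precedes L x x' \<longleftrightarrow> (\<exists>i j. i < j \<and> j < length L \<and> L ! i = x \<and> L ! j = x')"

definition prefers :: "'a list \<Rightarrow> 'a \<Rightarrow> 'a \<Rightarrow> bool" where
  "prefers L x x' \<longleftrightarrow> precedes L x x' \<or> (x \<in> set L \<and> x' \<notin> set L)"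

text \<open>A participant with list L, whose current situation is given by the set of partners
Cur (empty = single, which counts as being matched to someone off the list), prefers x to
the current situation.\<close>
definition prefers_to_situation :: "'a list \<Rightarrow> 'a \<Rightarrow> 'a set \<Rightarrow> bool" where
  "prefers_to_situation L x Cur \<longleftrightarrow>
     (if Cur = {} then x \<in> set L else (\<forall>x'\<in>Cur. prefers L x x'))"

definition marriage :: "'a set \<Rightarrow> 'a set \<Rightarrow> ('a \<times> 'a) set \<Rightarrow> bool" where
  "marriage W M S \<longleftrightarrow> S \<subseteq> W \<times> M \<and>
     (\<forall>w m m'. (w, m) \<in> S \<longrightarrow> (w, m') \<in> S \<longrightarrow> m = m') \<and>
     (\<forall>w w' m. (w, m) \<in> S \<longrightarrow> (w', m) \<in> S \<longrightarrow> w = w')"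

definition stable_marriage ::
  "'a set \<Rightarrow> 'a set \<Rightarrow> ('a \<Rightarrow> 'a list) \<Rightarrow> ('a \<Rightarrow> 'a list) \<Rightarrow> ('a \<times> 'a) set \<Rightarrow> bool" where
  "stable_marriage W M PW PM S \<longleftrightarrow> marriage W M S \<and>
     (\<forall>(w, m)\<in>S. m \<in> set (PW w) \<and> w \<in> set (PM m)) \<and>
     \<not> (\<exists>w\<in>W. \<exists>m\<in>M.
          prefers_to_situation (PW w) m {m'. (w, m') \<in> S} \<and>
          prefers_to_situation (PM m) w {w'. (w', m) \<in> S})"

definition single :: "('a \<times> 'a) set \<Rightarrow> 'a \<Rightarrow> bool" where
  "single S p \<longleftrightarrow> p \<notin> Domain S \<and> p \<notin> Range S"

definition Dset :: "nat \<Rightarrow> (nat \<times> nat) set" where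
  "Dset n = {(i, j). i \<in> {1..n} \<and> j \<in> {1..n} \<and> i \<noteq> j}"

text \<open>{0,1}^D: bit vectors indexed by D (True = 1), extended by 0 outside D.\<close>
definition bitvecs :: "(nat \<times> nat) set \<Rightarrow> (nat \<times> nat \<Rightarrow> bool) set" where
  "bitvecs D = {x. \<forall>ij. ij \<notin> D \<longrightarrow> \<not> x ij}"

definition DISJ :: "(nat \<times> nat) set \<Rightarrow> (nat \<times> nat \<Rightarrow> bool) \<Rightarrow> (nat \<times> nat \<Rightarrow> bool) \<Rightarrow> nat" where
  "DISJ D x y = (if \<not> (\<exists>ij\<in>D. x ij \<and> y ij) then 1 else 0)"

end

theory Submission imports Defs begin

declare upt_Suc[simp del]

definition PAc :: "nat \<Rightarrow> (nat \<Rightarrow> 'a) \<Rightarrow> (nat \<Rightarrow> 'a) \<Rightarrow> (nat\<times>nat\<Rightarrow>bool) \<Rightarrow> 'a \<Rightarrow> 'a list" where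
"PAc n f g u w = (if w \<notin> f ` {0..<2*n} then [] else (let k = inv_into {0..<2*n} f w in
   if k = 0 then map g [1..<n+1]
   else if k \<le> n then map (\<lambda>j. g (n+j)) (filter (\<lambda>j. u (k,j)) [1..<n+1]) @ [g k] else []))"

definition PBc :: "nat \<Rightarrow> (nat \<Rightarrow> 'a) \<Rightarrow> (nat \<Rightarrow> 'a) \<Rightarrow> (nat\<times>nat\<Rightarrow>bool) \<Rightarrow> 'a \<Rightarrow> 'a list" where
"PBc n f g v m = (if m \<notin> g ` {1..2*n} then [] else (let l = inv_into {1..2*n} g m in
   if l \<le> n then [f l, f 0] else map f (filter (\<lambda>i. v (i, l-n)) [1..<n+1])))"

lemma precedes_set: "precedes L x y \<Longrightarrow> x \<in> set L \<and> y \<in> set L"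
  unfolding precedes_def by auto

lemma prefers_set: "prefers L x y \<Longrightarrow> x \<in> set L"
  unfolding prefers_def by (auto dest: precedes_set)

lemma not_prefers_self: "distinct L \<Longrightarrow> \<not> prefers L x x"
  unfolding prefers_def precedes_def by (auto simp: nth_eq_iff_index_eq)

lemma not_precedes_two: "a \<noteq> b \<Longrightarrow> \<not> precedes [a,b] b a"
  unfolding precedes_def by (auto simp: less_Suc_eq)

lemma precedes_app: "x \<in> set xs \<Longrightarrow> precedes (xs @ [y]) x y"
proof -
  assume "x \<in> set xs"
  then obtain t where "t < length xs" "xs ! t = x" by (auto simp: in_set_conv_nth)
  then show ?thesis unfolding precedes_def
    by (intro exI[of _ t] exI[of _ "length xs"]) (auto simp: nth_append)
qed

locale constr =
  fixes n :: nat and f g :: "nat \<Rightarrow> 'a" and A B :: "'a set"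
  assumes n1: "1 \<le> n" and fA: "bij_betw f {0..<2*n} A" and gB: "bij_betw g {1..2*n} B"
    and disj: "A \<inter> B = {}"
begin

lemma finj: "i < 2*n \<Longrightarrow> j < 2*n \<Longrightarrow> f i = f j \<longleftrightarrow> i = j"
  using fA unfolding bij_betw_def by (meson atLeastLessThan_iff inj_on_eq_iff zero_le)

lemma ginj: "i \<in> {1..2*n} \<Longrightarrow> j \<in> {1..2*n} \<Longrightarrow> g i = g j \<longleftrightarrow> i = j"
  using gB unfolding bij_betw_def by (meson inj_on_eq_iff)

lemma fim: "f ` {0..<2*n} = A" using fA by (simp add: bij_betw_def)
lemma gim: "g ` {1..2*n} = B" using gB by (simp add: bij_betw_def)

lemma finv: "k < 2*n \<Longrightarrow> inv_into {0..<2*n} f (f k) = k"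
  using fA by (simp add: bij_betw_def inv_into_f_f)
lemma ginv: "l \<in> {1..2*n} \<Longrightarrow> inv_into {1..2*n} g (g l) = l"
  using gB by (simp add: bij_betw_def inv_into_f_f)

lemma PA_p: "PAc n f g u (f 0) = map g [1..<n+1]"
  using n1 finv[of 0] unfolding PAc_def by auto

lemma PA_a: "1 \<le> k \<Longrightarrow> k \<le> n \<Longrightarrow>
   PAc n f g u (f k) = map (\<lambda>j. g (n+j)) (filter (\<lambda>j. u (k,j)) [1..<n+1]) @ [g k]"
  using finv[of k] unfolding PAc_def by auto

lemma PA_o: "n < k \<Longrightarrow> k < 2*n \<Longrightarrow> PAc n f g u (f k) = []"
  using finv[of k] unfolding PAc_def by auto

lemma PA_out: "w \<notin> A \<Longrightarrow> PAc n f g u w = []"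
  using fim unfolding PAc_def by auto

lemma PB_c: "1 \<le> l \<Longrightarrow> l \<le> n \<Longrightarrow> PBc n f g v (g l) = [f l, f 0]"
  using ginv[of l] unfolding PBc_def by auto

lemma PB_e: "1 \<le> j \<Longrightarrow> j \<le> n \<Longrightarrow> PBc n f g v (g (n+j)) = map f (filter (\<lambda>i. v (i, j)) [1..<n+1])"
  using ginv[of "n+j"] unfolding PBc_def by auto

lemma PB_out: "m \<notin> B \<Longrightarrow> PBc n f g v m = []"
  using gim unfolding PBc_def by auto

lemma fA': "k < 2*n \<Longrightarrow> f k \<in> A" using fim by auto
lemma gB': "l \<in> {1..2*n} \<Longrightarrow> g l \<in> B" using gim by auto

lemma obtA: assumes "w \<in> A" obtains k where "k < 2*n" "w = f k"
  using assms fim by auto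
lemma obtB: assumes "m \<in> B" obtains l where "l \<in> {1..2*n}" "m = g l"
  using assms gim by auto


lemma prof_A: "PAc n f g u \<in> profiles A B"
  unfolding profiles_def
proof (rule CollectI, rule conjI; intro ballI allI impI)
  fix w assume "w \<in> A"
  then obtain k where k: "k < 2*n" "w = f k" by (rule obtA)
  have ij: "inj_on g (set [1..<n+1])" using ginj by (auto simp: inj_on_def)
  have ij2: "inj_on (\<lambda>j. g (n+j)) (set (filter (\<lambda>j. u (k,j)) [1..<n+1]))"
    using ginj by (auto simp: inj_on_def)
  show "distinct (PAc n f g u w) \<and> set (PAc n f g u w) \<subseteq> B"
  proof (cases "k = 0")
    case True
    then show ?thesis using k PA_p ij gB' by (auto simp: distinct_map)
  next
    case False
    show ?thesis
    proof (cases "k \<le> n")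
      case True
      have "g k \<noteq> g (n+x)" if "1 \<le> x" "x \<le> n" for x
        using ginj[of k "n+x"] True False that by auto
      moreover have "set (filter (\<lambda>j. u (k,j)) [1..<n+1]) \<subseteq> {1..n}" by auto
      ultimately have "g k \<notin> (\<lambda>j. g (n+j)) ` set (filter (\<lambda>j. u (k,j)) [1..<n+1])"
        by fastforce
      then show ?thesis using k PA_a[of k u] True False ij2 gB' by (auto simp: distinct_map)
    next
      case F2: False
      then show ?thesis using k PA_o by auto
    qed
  qed
next
  fix w assume "w \<notin> A" then show "PAc n f g u w = []" by (rule PA_out)
qed

lemma prof_B: "PBc n f g v \<in> profiles B A"
  unfolding profiles_def
proof (rule CollectI, rule conjI; intro ballI allI impI)
  fix m assume "m \<in> B"
  then obtain l where l: "l \<in> {1..2*n}" "m = g l" by (rule obtB)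
  show "distinct (PBc n f g v m) \<and> set (PBc n f g v m) \<subseteq> A"
  proof (cases "l \<le> n")
    case True
    then show ?thesis using l PB_c finj[of l 0] fA' by auto
  next
    case False
    define j where "j = l - n"
    have j: "l = n + j" "1 \<le> j" "j \<le> n" using l False unfolding j_def by auto
    have ij: "inj_on f (set (filter (\<lambda>i. v (i, j)) [1..<n+1]))" using finj by (auto simp: inj_on_def)
    show ?thesis using j l PB_e[of j v] ij fA' by (auto simp: distinct_map)
  qed
next
  fix m assume "m \<notin> B" then show "PBc n f g v m = []" by (rule PB_out)
qed


lemma blockD:
  assumes "stable_marriage A B PA PB S" "w \<in> A" "m \<in> B"
    "prefers_to_situation (PA w) m {m'. (w, m') \<in> S}"
    "prefers_to_situation (PB m) w {w'. (w', m) \<in> S}"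
  shows False
  using assms unfolding stable_marriage_def by blast

lemma onlist:
  assumes "stable_marriage A B PA PB S" "(w, m) \<in> S"
  shows "m \<in> set (PA w)" "w \<in> set (PB m)"
  using assms unfolding stable_marriage_def by auto

lemma func:
  assumes "stable_marriage A B PA PB S" 
  shows "(w, m) \<in> S \<Longrightarrow> (w, m') \<in> S \<Longrightarrow> m = m'"
    "(w, m) \<in> S \<Longrightarrow> (w', m) \<in> S \<Longrightarrow> w = w'"
  using assms unfolding stable_marriage_def marriage_def by blast+

lemma f0A: "f 0 \<in> A" using fA' n1 by auto

lemma dir1:
  assumes S: "stable_marriage A B (PAc n f g u) (PBc n f g v) S" and sg: "single S (f 0)"
  shows "\<not> (\<exists>i\<in>{1..n}. \<exists>j\<in>{1..n}. u (i,j) \<and> v (i,j))"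
proof
  assume "\<exists>i\<in>{1..n}. \<exists>j\<in>{1..n}. u (i,j) \<and> v (i,j)"
  then obtain i j where ij: "1 \<le> i" "i \<le> n" "1 \<le> j" "j \<le> n" "u (i,j)" "v (i,j)" by auto
  have all: "(f k, g k) \<in> S" if k: "1 \<le> k" "k \<le> n" for k
  proof (rule ccontr)
    assume nk: "(f k, g k) \<notin> S"
    have cur: "{w'. (w', g k) \<in> S} = {}"
    proof -
      { fix w' assume w': "(w', g k) \<in> S"
        then have "w' \<in> set (PBc n f g v (g k))" using onlist(2)[OF S] by blast
        then have "w' = f k \<or> w' = f 0" using PB_c k by auto
        then have False using nk sg w' unfolding single_def by auto }
      then show ?thesis by auto
    qed
    have curp: "{m'. (f 0, m') \<in> S} = {}" using sg by (auto simp: single_def)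
    have "g k \<in> set (PAc n f g u (f 0))" unfolding PA_p using k by (auto simp del: upt_Suc)
    then have p1: "prefers_to_situation (PAc n f g u (f 0)) (g k) {m'. (f 0, m') \<in> S}"
      using curp by (simp add: prefers_to_situation_def)
    have p2: "prefers_to_situation (PBc n f g v (g k)) (f 0) {w'. (w', g k) \<in> S}"
      using cur PB_c k by (simp add: prefers_to_situation_def)
    show False using blockD[OF S f0A gB'[of k] p1 p2] k by auto
  qed
  have curw: "{m'. (f i, m') \<in> S} = {g i}" using all[of i] ij func(1)[OF S] by auto
  have curm: "{w'. (w', g (n+j)) \<in> S} = {}"
  proof -
    { fix w' assume w': "(w', g (n+j)) \<in> S"
      then have "w' \<in> set (PBc n f g v (g (n+j)))" using onlist(2)[OF S] by blast
      then obtain i' where i': "1 \<le> i'" "i' \<le> n" "w' = f i'" using PB_e ij by auto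
      then have "(w', g i') \<in> S" using all by auto
      then have "g i' = g (n+j)" using func(1)[OF S] w' by blast
      then have False using ginj[of i' "n+j"] i' ij by auto }
    then show ?thesis by auto
  qed
  have mem: "g (n+j) \<in> set (map (\<lambda>j. g (n+j)) (filter (\<lambda>j. u (i,j)) [1..<n+1]))"
    using ij by auto
  have "prefers (PAc n f g u (f i)) (g (n+j)) (g i)"
    unfolding prefers_def PA_a[of i u, OF ij(1) ij(2)] using precedes_app[OF mem] by (rule disjI1)
  then have p1: "prefers_to_situation (PAc n f g u (f i)) (g (n+j)) {m'. (f i, m') \<in> S}"
    using curw by (simp add: prefers_to_situation_def)
  have p2: "prefers_to_situation (PBc n f g v (g (n+j))) (f i) {w'. (w', g (n+j)) \<in> S}"
    using curm PB_e ij by (auto simp: prefers_to_situation_def)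
  show False using blockD[OF S fA'[of i] gB'[of "n+j"] p1 p2] ij by auto
qed


lemma dir2:
  assumes nd: "\<not> (\<exists>i\<in>{1..n}. \<exists>j\<in>{1..n}. u (i,j) \<and> v (i,j))"
  shows "\<exists>S. stable_marriage A B (PAc n f g u) (PBc n f g v) S \<and> single S (f 0)"
proof -
  define S where "S = (\<lambda>i. (f i, g i)) ` {1..n}"
  have curW: "{m'. (f k, m') \<in> S} = (if 1 \<le> k \<and> k \<le> n then {g k} else {})" if "k < 2*n" for k
  proof -
    have "(f k, m') \<in> S \<longleftrightarrow> (1 \<le> k \<and> k \<le> n \<and> m' = g k)" for m'
    proof
      assume "(f k, m') \<in> S"
      then obtain i where i: "1 \<le> i" "i \<le> n" "f k = f i" "m' = g i" unfolding S_def by auto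
      then have "i = k" using finj[of k i] that by auto
      then show "1 \<le> k \<and> k \<le> n \<and> m' = g k" using i by auto
    qed (auto simp: S_def)
    then show ?thesis by auto
  qed
  have curM: "{w'. (w', g l) \<in> S} = (if l \<le> n then {f l} else {})" if "l \<in> {1..2*n}" for l
  proof -
    have "(w', g l) \<in> S \<longleftrightarrow> (l \<le> n \<and> w' = f l)" for w'
    proof
      assume "(w', g l) \<in> S"
      then obtain i where i: "1 \<le> i" "i \<le> n" "w' = f i" "g l = g i" unfolding S_def by auto
      then have "i = l" using ginj[of l i] that by auto
      then show "l \<le> n \<and> w' = f l" using i by auto
    next
      assume "l \<le> n \<and> w' = f l"
      then show "(w', g l) \<in> S" using that unfolding S_def by auto
    qed
    then show ?thesis by auto
  qed
  have mar: "marriage A B S"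
    unfolding marriage_def
  proof (intro conjI allI impI)
    show "S \<subseteq> A \<times> B" unfolding S_def using fA' gB' by auto
  next
    fix w m m' assume "(w, m) \<in> S" "(w, m') \<in> S"
    then show "m = m'" unfolding S_def using finj by auto
  next
    fix w w' m assume "(w, m) \<in> S" "(w', m) \<in> S"
    then show "w = w'" unfolding S_def using ginj by auto
  qed
  have onl: "\<forall>(w, m)\<in>S. m \<in> set (PAc n f g u w) \<and> w \<in> set (PBc n f g v m)"
    unfolding S_def using PA_a PB_c by auto
  have nb: False if w: "w \<in> A" and m: "m \<in> B"
    and p1: "prefers_to_situation (PAc n f g u w) m {m'. (w, m') \<in> S}"
    and p2: "prefers_to_situation (PBc n f g v m) w {w'. (w', m) \<in> S}" for w m
  proof -
    obtain k where k: "k < 2*n" "w = f k" using w by (rule obtA)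
    obtain l where l: "l \<in> {1..2*n}" "m = g l" using m by (rule obtB)
    show False
    proof (cases "k = 0")
      case True
      have "m \<in> set (map g [1..<n+1])" using p1 curW[of 0] k True PA_p
        by (simp add: prefers_to_situation_def)
      then obtain t where t: "1 \<le> t" "t \<le> n" "m = g t" by auto
      have "g l = g t" using l(2) t(3) by simp
      then have lt: "l = t" using ginj[of l t] l(1) t(1,2) by simp
      have cm: "{w'. (w', m) \<in> S} = {f l}" using curM[OF l(1)] lt t l(2) by simp
      have pb: "PBc n f g v m = [f l, f 0]" using PB_c[of l v] l(2) t lt by simp
      have "prefers [f l, f 0] (f 0) (f l)"
        using p2 unfolding cm pb prefers_to_situation_def k(2) True by simp
      moreover have "f l \<noteq> f 0"
      proof
        assume "f l = f 0"
        moreover have "l < 2*n" "0 < 2*n" using lt t by auto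
        ultimately have "l = 0" using finj by blast
        then show False using lt t by simp
      qed
      moreover have "\<not> precedes [f l, f 0] (f 0) (f l)" by (rule not_precedes_two) fact
      ultimately show False unfolding prefers_def by simp
    next
      case k0: False
      show False
      proof (cases "k \<le> n")
        case True
        let ?L = "map (\<lambda>j. g (n+j)) (filter (\<lambda>j. u (k,j)) [1..<n+1]) @ [g k]"
        have cw: "{m'. (w, m') \<in> S} = {g k}" using curW[OF k(1)] k(2) True k0 by simp
        have pa: "PAc n f g u w = ?L" using PA_a[of k u] k(2) True k0 by simp
        have pr: "prefers ?L m (g k)"
          using p1 unfolding cw pa prefers_to_situation_def by simp
        have dL: "distinct ?L" using prof_A[of u] k True k0 PA_a[of k u] fA'[of k]
          unfolding profiles_def by force
        have "m \<in> set ?L" using prefers_set[OF pr] .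
        moreover have "m \<noteq> g k" using not_prefers_self[OF dL] pr by auto
        ultimately obtain j where j: "1 \<le> j" "j \<le> n" "u (k,j)" "m = g (n+j)" by auto
        have "{w'. (w', m) \<in> S} = {}" using curM[of "n+j"] j by auto
        then have "f k \<in> set (PBc n f g v (g (n+j)))" using p2 k j
          by (simp add: prefers_to_situation_def)
        then obtain i where i: "1 \<le> i" "i \<le> n" "v (i,j)" "f k = f i" using PB_e j by auto
        then have "i = k" using finj[of k i] k(1) i(1,2,4) by simp
        then show False using nd i j True k0 by auto
      next
        case False
        then show False using p1 curW[OF k(1)] PA_o[of k u] k
          by (simp add: prefers_to_situation_def)
      qed
    qed
  qed
  have st: "stable_marriage A B (PAc n f g u) (PBc n f g v) S"
    unfolding stable_marriage_def using mar onl nb by blast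
  have "single S (f 0)"
  proof -
    have "f 0 \<noteq> f i" if "1 \<le> i" "i \<le> n" for i using finj[of 0 i] that by simp
    then have "f 0 \<notin> Domain S" unfolding S_def by (auto simp del: upt_Suc) (metis)
    moreover have "f 0 \<notin> Range S" unfolding S_def using gB' f0A disj by auto
    ultimately show ?thesis by (simp add: single_def)
  qed
  then show ?thesis using st by blast
qed

lemma core: "(\<exists>S. stable_marriage A B (PAc n f g u) (PBc n f g v) S \<and> single S (f 0))
   \<longleftrightarrow> \<not> (\<exists>i\<in>{1..n}. \<exists>j\<in>{1..n}. u (i,j) \<and> v (i,j))"
proof
  assume "\<exists>S. stable_marriage A B (PAc n f g u) (PBc n f g v) S \<and> single S (f 0)"
  then obtain S where "stable_marriage A B (PAc n f g u) (PBc n f g v) S" "single S (f 0)" by blast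
  then show "\<not> (\<exists>i\<in>{1..n}. \<exists>j\<in>{1..n}. u (i,j) \<and> v (i,j))" by (rule dir1)
next
  assume "\<not> (\<exists>i\<in>{1..n}. \<exists>j\<in>{1..n}. u (i,j) \<and> v (i,j))"
  then show "\<exists>S. stable_marriage A B (PAc n f g u) (PBc n f g v) S \<and> single S (f 0)" by (rule dir2)
qed

end

lemma swap_sm: "stable_marriage W M PW PM S \<longleftrightarrow> stable_marriage M W PM PW (S\<inverse>)"
  unfolding stable_marriage_def marriage_def by auto

lemma swap_single: "single (S\<inverse>) p \<longleftrightarrow> single S p"
  unfolding single_def by auto

lemma gen:
  fixes A B :: "'a set"
  assumes "finite A" "finite B" "A \<inter> B = {}" "card A = 2 * n" "card B = 2 * n" "p \<in> A"
  shows "\<exists>PA PB. (\<forall>u. PA u \<in> profiles A B) \<and> (\<forall>v. PB v \<in> profiles B A) \<and>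
     (\<forall>u v. (\<exists>S. stable_marriage A B (PA u) (PB v) S \<and> single S p)
        \<longleftrightarrow> \<not> (\<exists>i\<in>{1..n}. \<exists>j\<in>{1..n}. u (i,j) \<and> v (i,j)))"
proof -
  have n1: "1 \<le> n" using assms card_gt_0_iff[of A] by auto
  have cA: "card (A - {p}) = 2*n - 1" using assms by auto
  obtain h where h: "bij_betw h {1..card (A - {p})} (A - {p})"
    using ex_bij_betw_nat_finite_1[of "A - {p}"] assms by auto
  define f where "f i = (if i = 0 then p else h i)" for i
  have hinj: "inj_on h {1..2*n-1}" and him: "h ` {1..2*n-1} = A - {p}"
    using h cA by (auto simp: bij_betw_def)
  have fA: "bij_betw f {0..<2*n} A"
    unfolding bij_betw_def
  proof
    show "inj_on f {0..<2*n}"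
    proof (rule inj_onI)
      fix x y assume x: "x \<in> {0..<2*n}" and y: "y \<in> {0..<2*n}" and e: "f x = f y"
      have hx: "h x \<in> A - {p}" if "x \<noteq> 0" "x < 2*n" for x
        using him that by auto
      show "x = y"
      proof (cases "x = 0"; cases "y = 0")
        assume "x \<noteq> 0" "y \<noteq> 0"
        then show "x = y" using e x y hinj unfolding f_def inj_on_def by auto
      next
        assume "x = 0" "y \<noteq> 0" then show "x = y" using e hx[of y] y unfolding f_def by auto
      next
        assume "x \<noteq> 0" "y = 0" then show "x = y" using e hx[of x] x unfolding f_def by auto
      qed simp
    qed
  next
    show "f ` {0..<2*n} = A"
    proof
      show "f ` {0..<2*n} \<subseteq> A" using him assms(6) unfolding f_def by auto
    next
      show "A \<subseteq> f ` {0..<2*n}"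
      proof
        fix a assume a: "a \<in> A"
        show "a \<in> f ` {0..<2*n}"
        proof (cases "a = p")
          case True then show ?thesis unfolding f_def using n1 by (auto intro!: image_eqI[of _ _ 0])
        next
          case False
          then obtain i where i: "i \<in> {1..2*n-1}" "a = h i" using him a by (metis DiffI imageE singletonD)
          then show ?thesis unfolding f_def by (auto intro!: image_eqI[of _ _ i])
        qed
      qed
    qed
  qed
  obtain g where g: "bij_betw g {1..card B} B" using ex_bij_betw_nat_finite_1[of B] assms by auto
  then have gB: "bij_betw g {1..2*n} B" using assms by simp
  interpret constr n f g A B using n1 fA gB assms(3) by unfold_locales
  have "p = f 0" unfolding f_def by simp
  then show ?thesis using prof_A prof_B core by blast
qed

lemma disj_eq:
  assumes "x \<in> bitvecs (Dset n)"
  shows "DISJ (Dset n) x y \<noteq> 0 \<longleftrightarrow> \<not> (\<exists>i\<in>{1..n}. \<exists>j\<in>{1..n}. x (i,j) \<and> y (i,j))"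
proof -
  have xd: "\<not> x (i,i)" for i using assms unfolding bitvecs_def Dset_def by auto
  have "(\<exists>ij\<in>Dset n. x ij \<and> y ij) \<longleftrightarrow> (\<exists>i\<in>{1..n}. \<exists>j\<in>{1..n}. x (i,j) \<and> y (i,j))"
  proof
    assume "\<exists>ij\<in>Dset n. x ij \<and> y ij"
    then show "\<exists>i\<in>{1..n}. \<exists>j\<in>{1..n}. x (i,j) \<and> y (i,j)" unfolding Dset_def by blast
  next
    assume "\<exists>i\<in>{1..n}. \<exists>j\<in>{1..n}. x (i,j) \<and> y (i,j)"
    then obtain i j where ij: "i \<in> {1..n}" "j \<in> {1..n}" "x (i,j)" "y (i,j)" by blast
    then have "i \<noteq> j" using xd by blast
    then have "(i,j) \<in> Dset n" using ij(1,2) unfolding Dset_def by blast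
    then show "\<exists>ij\<in>Dset n. x ij \<and> y ij" using ij(3,4) by blast
  qed
  then show ?thesis unfolding DISJ_def by simp
qed

theorem lemma21:
  fixes n :: nat and W M :: "'a set" and p :: 'a
  assumes "finite W" "finite M" "W \<inter> M = {}"
    and "card W = 2 * n" "card M = 2 * n"
    and "p \<in> W \<union> M"
  shows "\<exists>PrefW PrefM.
           (\<forall>x\<in>bitvecs (Dset n). PrefW x \<in> profiles W M) \<and>
           (\<forall>y\<in>bitvecs (Dset n). PrefM y \<in> profiles M W) \<and>
           (\<forall>x\<in>bitvecs (Dset n). \<forall>y\<in>bitvecs (Dset n).
              (\<exists>S. stable_marriage W M (PrefW x) (PrefM y) S \<and> single S p)
              \<longleftrightarrow> DISJ (Dset n) x y \<noteq> 0)"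
proof (cases "p \<in> W")
  case True
  obtain PA PB where P: "\<forall>u. PA u \<in> profiles W M" "\<forall>v. PB v \<in> profiles M W"
    "\<forall>u v. (\<exists>S. stable_marriage W M (PA u) (PB v) S \<and> single S p)
        \<longleftrightarrow> \<not> (\<exists>i\<in>{1..n}. \<exists>j\<in>{1..n}. u (i,j) \<and> v (i,j))"
    using gen[of W M n p] assms True by blast
  show ?thesis
  proof (rule exI[of _ PA], rule exI[of _ PB], intro conjI ballI)
    fix x assume "x \<in> bitvecs (Dset n)" then show "PA x \<in> profiles W M" using P(1) by blast
  next
    fix y assume "y \<in> bitvecs (Dset n)" then show "PB y \<in> profiles M W" using P(2) by blast
  next
    fix x y assume x: "x \<in> bitvecs (Dset n)" and y: "y \<in> bitvecs (Dset n)"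
    have e: "(\<exists>S. stable_marriage W M (PA x) (PB y) S \<and> single S p)
        \<longleftrightarrow> \<not> (\<exists>i\<in>{1..n}. \<exists>j\<in>{1..n}. x (i,j) \<and> y (i,j))" using P(3) by blast
    show "(\<exists>S. stable_marriage W M (PA x) (PB y) S \<and> single S p) \<longleftrightarrow> DISJ (Dset n) x y \<noteq> 0"
      unfolding e disj_eq[OF x, of y] ..
  qed
next
  case False
  then have pM: "p \<in> M" using assms by auto
  have d: "M \<inter> W = {}" using assms by auto
  obtain PA PB where P: "\<forall>u. PA u \<in> profiles M W" "\<forall>v. PB v \<in> profiles W M"
    "\<forall>u v. (\<exists>S. stable_marriage M W (PA u) (PB v) S \<and> single S p)
        \<longleftrightarrow> \<not> (\<exists>i\<in>{1..n}. \<exists>j\<in>{1..n}. u (i,j) \<and> v (i,j))"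
    using gen[of M W n p] assms d pM by blast
  have eq: "(\<exists>S. stable_marriage W M (PB x) (PA y) S \<and> single S p) \<longleftrightarrow>
            (\<exists>S. stable_marriage M W (PA y) (PB x) S \<and> single S p)" for x y
  proof
    assume "\<exists>S. stable_marriage W M (PB x) (PA y) S \<and> single S p"
    then obtain S where S: "stable_marriage W M (PB x) (PA y) S" "single S p" by blast
    have a: "stable_marriage M W (PA y) (PB x) (S\<inverse>)" using swap_sm[of W M "PB x" "PA y" S] S(1) by (rule iffD1)
    have b: "single (S\<inverse>) p" using swap_single[of S p] S(2) by (rule iffD2)
    show "\<exists>S. stable_marriage M W (PA y) (PB x) S \<and> single S p" using a b by (intro exI[of _ "S\<inverse>"] conjI)
  next
    assume "\<exists>S. stable_marriage M W (PA y) (PB x) S \<and> single S p"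
    then obtain S where S: "stable_marriage M W (PA y) (PB x) S" "single S p" by blast
    have a: "stable_marriage W M (PB x) (PA y) (S\<inverse>)" using S(1) swap_sm[of M W "PA y" "PB x" S] converse_converse[of S] by simp
    have b: "single (S\<inverse>) p" using swap_single[of S p] S(2) by (rule iffD2)
    show "\<exists>S. stable_marriage W M (PB x) (PA y) S \<and> single S p" using a b by (intro exI[of _ "S\<inverse>"] conjI)
  qed
  show ?thesis
  proof (rule exI[of _ PB], rule exI[of _ PA], intro conjI ballI)
    fix x assume "x \<in> bitvecs (Dset n)" then show "PB x \<in> profiles W M" using P(2) by blast
  next
    fix y assume "y \<in> bitvecs (Dset n)" then show "PA y \<in> profiles M W" using P(1) by blast
  next
    fix x y assume x: "x \<in> bitvecs (Dset n)" and y: "y \<in> bitvecs (Dset n)"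
    show "(\<exists>S. stable_marriage W M (PB x) (PA y) S \<and> single S p) \<longleftrightarrow> DISJ (Dset n) x y \<noteq> 0"
    proof -
      have e: "(\<exists>S. stable_marriage M W (PA y) (PB x) S \<and> single S p)
        \<longleftrightarrow> \<not> (\<exists>i\<in>{1..n}. \<exists>j\<in>{1..n}. y (i,j) \<and> x (i,j))" using P(3) by blast
      have c: "(\<exists>i\<in>{1..n}. \<exists>j\<in>{1..n}. y (i,j) \<and> x (i,j)) \<longleftrightarrow>
               (\<exists>i\<in>{1..n}. \<exists>j\<in>{1..n}. x (i,j) \<and> y (i,j))" by blast
      show ?thesis unfolding eq[of x y] e c disj_eq[OF x, of y] ..
    qed
  qed
qed

end
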